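(* Let $(Q,\mathbf z)$ be a weak scaffold for $\pi_\bullet$. Then the modified tropical Plücker vector $\bar\pi_\bullet$ lies in $\mathrm{Dr}(k,n)(\mathbb Z)$, i.e. it is a tropical Plücker vector with all coordinates integers.
   Context: $Q$ is a finite loopless directed graph with $\mathbf z=(z_1,\dots,z_n)\in V(Q)^n$; directed distance $\delta$ uses cost 1 forwards and $k-1$ backwards along an edge (assumed finite, and $\delta(v,w)=1,\delta(w,v)=k-1$ for each edge $v\to w$). Its tropical Plücker vector is $\pi_I=-\frac1k\min_{x}\sum_{i\in I}\delta(x,z_i)$, $I\in\binom{[n]}k$. A coloring is $c:V(Q)\to\mathbb Z/k$ with $c(w)=c(v)+1$ for edges $v\to w$. $(Q,\mathbf z)$ is a weak scaffold for $\pi_\bullet$ if $\pi_\bullet$ is its tropical Plücker vector, $\pi_\bullet\in\mathrm{Dr}(k,n)$ (for all $S\in\binom{[n]}{k-2}$, $a<b<c<d\notin S$, $\min(\pi_{Sab}+\pi_{Scd},\pi_{Sac}+\pi_{Sbd},\pi_{Sad}+\pi_{Sbc})$ attained twice), and $Q$ admits a coloring $c$ (fixed). Identifying $\mathbb Z/k$ with $\{0,\dots,k-1\}$, the modified vector is $\bar\pi_I=\pi_I+\frac1k\sum_{i\in I}c(z_i)$. *)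

theory Defs
  imports Complex_Main
begin

text \<open>A quiver Q on the finite vertex type 'v is given by its edge relation E
  (E v w means there is an arrow v -> w).\<close>

inductive dwalk :: "('v \<Rightarrow> 'v \<Rightarrow> bool) \<Rightarrow> nat \<Rightarrow> 'v \<Rightarrow> 'v \<Rightarrow> nat \<Rightarrow> bool"
  for E :: "'v \<Rightarrow> 'v \<Rightarrow> bool" and k :: nat where
  refl: "dwalk E k v v 0"
| fwd: "E v u \<Longrightarrow> dwalk E k u w c \<Longrightarrow> dwalk E k v w (c + 1)"
| bwd: "E u v \<Longrightarrow> dwalk E k u w c \<Longrightarrow> dwalk E k v w (c + (k - 1))"

text \<open>Directed distance (meaningful when some walk exists).\<close>
definition ddist :: "('v \<Rightarrow> 'v \<Rightarrow> bool) \<Rightarrow> nat \<Rightarrow> 'v \<Rightarrow> 'v \<Rightarrow> nat" where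
  "ddist E k v w = (LEAST c. dwalk E k v w c)"

definition trop_plucker :: "('v::finite \<Rightarrow> 'v \<Rightarrow> bool) \<Rightarrow> nat \<Rightarrow> (nat \<Rightarrow> 'v) \<Rightarrow> nat set \<Rightarrow> real" where
  "trop_plucker E k z I =
     - (1 / real k) * real (Min ((\<lambda>x. \<Sum>i\<in>I. ddist E k x (z i)) ` UNIV))"

text \<open>Coloring c : V(Q) -> Z/k, with Z/k identified with {0,...,k-1}.\<close>
definition is_coloring :: "('v \<Rightarrow> 'v \<Rightarrow> bool) \<Rightarrow> nat \<Rightarrow> ('v \<Rightarrow> nat) \<Rightarrow> bool" where
  "is_coloring E k c \<longleftrightarrow> (\<forall>v. c v < k) \<and> (\<forall>v w. E v w \<longrightarrow> c w = (c v + 1) mod k)"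

definition ksubsets :: "nat \<Rightarrow> nat \<Rightarrow> nat set set" where
  "ksubsets k n = {I. I \<subseteq> {1..n} \<and> card I = k}"

definition min_twice :: "real \<Rightarrow> real \<Rightarrow> real \<Rightarrow> bool" where
  "min_twice x y w \<longleftrightarrow>
     (let m = min x (min y w) in
       (x = m \<and> y = m) \<or> (x = m \<and> w = m) \<or> (y = m \<and> w = m))"

definition in_Dr :: "nat \<Rightarrow> nat \<Rightarrow> (nat set \<Rightarrow> real) \<Rightarrow> bool" where
  "in_Dr k n p \<longleftrightarrow>
     (\<forall>S a b c d. S \<subseteq> {1..n} \<and> card S + 2 = k \<and>
        a \<in> {1..n} - S \<and> b \<in> {1..n} - S \<and> c \<in> {1..n} - S \<and> d \<in> {1..n} - S \<and>
        a < b \<and> b < c \<and> c < d \<longrightarrow>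
        min_twice (p (S \<union> {a, b}) + p (S \<union> {c, d}))
                  (p (S \<union> {a, c}) + p (S \<union> {b, d}))
                  (p (S \<union> {a, d}) + p (S \<union> {b, c})))"

definition in_Dr_int :: "nat \<Rightarrow> nat \<Rightarrow> (nat set \<Rightarrow> real) \<Rightarrow> bool" where
  "in_Dr_int k n p \<longleftrightarrow> in_Dr k n p \<and> (\<forall>I\<in>ksubsets k n. p I \<in> \<int>)"

definition weak_scaffold ::
  "('v::finite \<Rightarrow> 'v \<Rightarrow> bool) \<Rightarrow> nat \<Rightarrow> nat \<Rightarrow> (nat \<Rightarrow> 'v) \<Rightarrow> (nat set \<Rightarrow> real) \<Rightarrow> bool" where
  "weak_scaffold E k n z p \<longleftrightarrow>
     (\<forall>I\<in>ksubsets k n. p I = trop_plucker E k z I) \<and> in_Dr k n p \<and>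
     (\<exists>c. is_coloring E k c)"

definition modified_vec :: "nat \<Rightarrow> ('v \<Rightarrow> nat) \<Rightarrow> (nat \<Rightarrow> 'v) \<Rightarrow> (nat set \<Rightarrow> real) \<Rightarrow> nat set \<Rightarrow> real" where
  "modified_vec k c z p I = p I + (1 / real k) * real (\<Sum>i\<in>I. c (z i))"

end

theory Submission
  imports Defs
begin

lemma dwalk_mod:
  assumes "dwalk E k v w d" and col: "is_coloring E k c"
  shows "(int d + int (c v)) mod int k = int (c w) mod int k"
  using assms(1)
proof (induction rule: dwalk.induct)
  case (refl v)
  then show ?case by simp
next
  case (fwd v u w d)
  have "int (c u) mod int k = (int (c v) + 1) mod int k"
    using col fwd.hyps(1) unfolding is_coloring_def by (simp add: zmod_int add.commute)
  then have "(int d + int (c u)) mod int k = (int d + (int (c v) + 1)) mod int k"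
    by (metis mod_add_right_eq)
  then show ?case using fwd.IH by (simp add: algebra_simps)
next
  case (bwd u v w d)
  have kpos: "k \<ge> 1" using col unfolding is_coloring_def
    by (metis less_one linorder_not_le not_less_zero)
  have "int (c v) mod int k = (int (c u) + 1) mod int k"
    using col bwd.hyps(1) unfolding is_coloring_def by (simp add: zmod_int add.commute)
  then have "(int d + int (k - 1) + int (c v)) mod int k
      = (int d + int (k - 1) + (int (c u) + 1)) mod int k"
    by (metis mod_add_right_eq)
  also have "int d + int (k - 1) + (int (c u) + 1) = (int d + int (c u)) + int k * 1"
    using kpos by simp
  also have "((int d + int (c u)) + int k * 1) mod int k = (int d + int (c u)) mod int k"
    by simp
  finally show ?case using bwd.IH by simp
qed

lemma ddist_mod:
  assumes "\<forall>v w. \<exists>d. dwalk E k v w d" and "is_coloring E k c"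
  shows "(int (ddist E k v w) + int (c v)) mod int k = int (c w) mod int k"
proof -
  obtain d where "dwalk E k v w d" using assms(1) by blast
  then have "dwalk E k v w (ddist E k v w)" unfolding ddist_def by (rule LeastI)
  then show ?thesis by (rule dwalk_mod[OF _ assms(2)])
qed

lemma sum_mod_cong:
  assumes "\<And>i. i \<in> I \<Longrightarrow> (f i :: int) mod m = g i mod m"
  shows "(\<Sum>i\<in>I. f i) mod m = (\<Sum>i\<in>I. g i) mod m"
  using assms
proof (induction I rule: infinite_finite_induct)
  case (insert x F)
  have "f x mod m = g x mod m" using insert.prems by simp
  moreover have "(\<Sum>i\<in>F. f i) mod m = (\<Sum>i\<in>F. g i) mod m"
    using insert.IH insert.prems by simp
  ultimately have "(f x + (\<Sum>i\<in>F. f i)) mod m = (g x + (\<Sum>i\<in>F. g i)) mod m"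
    by (rule mod_add_cong)
  then show ?case using insert.hyps by simp
qed simp_all

lemma min_twice_shift:
  "min_twice (x + t) (y + t) (w + t) = min_twice x y w"
  unfolding min_twice_def Let_def by (auto simp: min_def)

theorem proposition3p11:
  fixes E :: "'v::finite \<Rightarrow> 'v \<Rightarrow> bool"
    and k n :: nat
    and z :: "nat \<Rightarrow> 'v"
    and p :: "nat set \<Rightarrow> real"
    and c :: "'v \<Rightarrow> nat"
  assumes loopless: "\<forall>v. \<not> E v v"
    and dist_finite: "\<forall>v w. \<exists>d. dwalk E k v w d"
    and edge_dist: "\<forall>v w. E v w \<longrightarrow> ddist E k v w = 1 \<and> ddist E k w v = k - 1"
    and scaffold: "weak_scaffold E k n z p"
    and coloring: "is_coloring E k c"
  shows "in_Dr_int k n (modified_vec k c z p)"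
proof -
  have tp: "\<forall>I\<in>ksubsets k n. p I = trop_plucker E k z I" and dr: "in_Dr k n p"
    using scaffold unfolding weak_scaffold_def by auto
  have kpos: "k \<ge> 1" using coloring unfolding is_coloring_def
    by (metis less_one linorder_not_le not_less_zero)
  define L where "L I = (1 / real k) * real (\<Sum>i\<in>I. c (z i))" for I
  have mv: "modified_vec k c z p I = p I + L I" for I
    unfolding modified_vec_def L_def by simp
  have Ladd: "L (insert a (insert b S)) = L S + (1 / real k) * (real (c (z a)) + real (c (z b)))"
    if "finite S" "a \<notin> S" "b \<notin> S" "a \<noteq> b" for S a b
    using that unfolding L_def by (simp add: algebra_simps)
  have part1: "in_Dr k n (modified_vec k c z p)"
    unfolding in_Dr_def
  proof (intro allI impI)
    fix S a b cc d
    assume h: "S \<subseteq> {1..n} \<and> card S + 2 = k \<and> a \<in> {1..n} - S \<and> b \<in> {1..n} - S \<and>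
        cc \<in> {1..n} - S \<and> d \<in> {1..n} - S \<and> a < b \<and> b < cc \<and> cc < d"
    have fin: "finite S" using h finite_subset by blast
    define t where "t = 2 * L S + (1 / real k) * (real (c (z a)) + real (c (z b)) + real (c (z cc)) + real (c (z d)))"
    have e1: "L (S \<union> {a, b}) + L (S \<union> {cc, d}) = t"
      using h fin by (simp add: Ladd t_def algebra_simps)
    have e2: "L (S \<union> {a, cc}) + L (S \<union> {b, d}) = t"
      using h fin by (simp add: Ladd t_def algebra_simps)
    have e3: "L (S \<union> {a, d}) + L (S \<union> {b, cc}) = t"
      using h fin by (simp add: Ladd t_def algebra_simps)
    have "min_twice (p (S \<union> {a, b}) + p (S \<union> {cc, d}))
                  (p (S \<union> {a, cc}) + p (S \<union> {b, d}))
                  (p (S \<union> {a, d}) + p (S \<union> {b, cc}))"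
      using dr h unfolding in_Dr_def by blast
    then have "min_twice (p (S \<union> {a, b}) + p (S \<union> {cc, d}) + t)
                  (p (S \<union> {a, cc}) + p (S \<union> {b, d}) + t)
                  (p (S \<union> {a, d}) + p (S \<union> {b, cc}) + t)"
      by (simp add: min_twice_shift)
    then show "min_twice (modified_vec k c z p (S \<union> {a, b}) + modified_vec k c z p (S \<union> {cc, d}))
                  (modified_vec k c z p (S \<union> {a, cc}) + modified_vec k c z p (S \<union> {b, d}))
                  (modified_vec k c z p (S \<union> {a, d}) + modified_vec k c z p (S \<union> {b, cc}))"
    proof -
      let ?m = "modified_vec k c z p"
      have f1: "?m (S \<union> {a, b}) + ?m (S \<union> {cc, d}) = p (S \<union> {a, b}) + p (S \<union> {cc, d}) + t"
        unfolding mv using e1 by simp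
      have f2: "?m (S \<union> {a, cc}) + ?m (S \<union> {b, d}) = p (S \<union> {a, cc}) + p (S \<union> {b, d}) + t"
        unfolding mv using e2 by simp
      have f3: "?m (S \<union> {a, d}) + ?m (S \<union> {b, cc}) = p (S \<union> {a, d}) + p (S \<union> {b, cc}) + t"
        unfolding mv using e3 by simp
      show ?thesis unfolding f1 f2 f3 by fact
    qed
  qed
  have part2: "modified_vec k c z p I \<in> \<int>" if I: "I \<in> ksubsets k n" for I
  proof -
    have fin: "finite I" and cI: "card I = k"
      using I unfolding ksubsets_def by (auto intro: finite_subset)
    let ?f = "\<lambda>x. \<Sum>i\<in>I. ddist E k x (z i)"
    define m where "m = Min (?f ` UNIV)"
    have "m \<in> ?f ` UNIV" unfolding m_def by (rule Min_in) auto
    then obtain x0 where m: "m = ?f x0" by auto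
    have "(\<Sum>i\<in>I. int (ddist E k x0 (z i)) + int (c x0)) mod int k
        = (\<Sum>i\<in>I. int (c (z i))) mod int k"
      by (rule sum_mod_cong) (rule ddist_mod[OF dist_finite coloring])
    moreover have "(\<Sum>i\<in>I. int (ddist E k x0 (z i)) + int (c x0)) = int m + int k * int (c x0)"
      using cI m by (simp add: sum.distrib)
    ultimately have "(int m) mod int k = (\<Sum>i\<in>I. int (c (z i))) mod int k"
      by simp
    then have "int k dvd (\<Sum>i\<in>I. int (c (z i))) - int m"
      by (metis mod_eq_dvd_iff)
    then obtain q where q: "(\<Sum>i\<in>I. int (c (z i))) - int m = int k * q" by (auto simp: dvd_def)
    have pI: "p I = - (1 / real k) * real m"
      using tp I unfolding trop_plucker_def m_def by simp
    have "modified_vec k c z p I = (real (\<Sum>i\<in>I. c (z i)) - real m) / real k"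
      unfolding modified_vec_def pI by (simp add: diff_divide_distrib)
    also have "real (\<Sum>i\<in>I. c (z i)) - real m = real k * of_int q"
      using arg_cong[OF q, of "of_int :: int \<Rightarrow> real"] by simp
    finally have "modified_vec k c z p I = of_int q" using kpos by simp
    then show ?thesis by simp
  qed
  show ?thesis unfolding in_Dr_int_def using part1 part2 by blast
qed

end
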